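(* $$\pi_{q^m}(\mathrm{MA}_n(\mathbb{F}_q))= \{ \sigma\in \mathrm{Maps}(\mathbb{F}_{q^m}^n,\mathbb{F}_{q^m}^n)~|~ \sigma\phi=\phi\sigma ~\forall~ \phi\in \mathrm{Gal}(\mathbb{F}_{q^m}:\mathbb{F}_q)\}.$$
   Context: $\mathrm{MA}_n(\mathbb{F}_q)$ denotes the set of polynomial maps $F=(F_1,\dots,F_n)$ with $F_i\in\mathbb{F}_q[X_1,\dots,X_n]$, and $\pi_{q^m}(F)$ is the induced map $\mathbb{F}_{q^m}^n\to\mathbb{F}_{q^m}^n$. The Galois group acts on $\mathbb{F}_{q^m}^n$ coordinatewise. *)

theory Defs
  imports Main "HOL-Library.Poly_Mapping"
begin

definition subfield :: "'a::field set \<Rightarrow> bool" where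
  "subfield K \<longleftrightarrow> 0 \<in> K \<and> 1 \<in> K \<and>
     (\<forall>a\<in>K. \<forall>b\<in>K. a + b \<in> K \<and> a * b \<in> K) \<and>
     (\<forall>a\<in>K. - a \<in> K \<and> inverse a \<in> K)"

text \<open>Multivariate polynomials in variables indexed by 'n: finitely supported maps
  from exponent vectors (monomials) to coefficients.\<close>
type_synonym ('n, 'a) mpoly = "('n \<Rightarrow>\<^sub>0 nat) \<Rightarrow>\<^sub>0 'a"

definition mpoly_eval :: "('n::finite, 'a::comm_ring_1) mpoly \<Rightarrow> ('n \<Rightarrow> 'a) \<Rightarrow> 'a" where
  "mpoly_eval p x = (\<Sum>m\<in>Poly_Mapping.keys p. Poly_Mapping.lookup p m * (\<Prod>i\<in>UNIV. x i ^ Poly_Mapping.lookup m i))"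

definition MA :: "'a::comm_ring_1 set \<Rightarrow> ('n \<Rightarrow> ('n, 'a) mpoly) set" where
  "MA K = {F. \<forall>i m. Poly_Mapping.lookup (F i) m \<in> K}"

definition induced_map :: "('n::finite \<Rightarrow> ('n, 'a::comm_ring_1) mpoly) \<Rightarrow> ('n \<Rightarrow> 'a) \<Rightarrow> ('n \<Rightarrow> 'a)" where
  "induced_map F = (\<lambda>x i. mpoly_eval (F i) x)"

definition galois_group :: "'a::field set \<Rightarrow> ('a \<Rightarrow> 'a) set" where
  "galois_group K = {\<phi>. bij \<phi> \<and> (\<forall>a b. \<phi> (a + b) = \<phi> a + \<phi> b) \<and>
      (\<forall>a b. \<phi> (a * b) = \<phi> a * \<phi> b) \<and> \<phi> 1 = 1 \<and> (\<forall>a\<in>K. \<phi> a = a)}"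

end

theory Submission
  imports Defs "HOL-Computational_Algebra.Computational_Algebra" "HOL-Library.FuncSet"
begin

lemma card_UNIV_ge2: "card (UNIV :: 'a::{field,finite} set) \<ge> 2"
proof -
  have "card {0::'a, 1} \<le> card (UNIV :: 'a set)" by (rule card_mono) auto
  thus ?thesis by simp
qed

lemma pow_card_same:
  fixes x :: "'a :: {field,finite}"
  shows "x ^ card (UNIV :: 'a set) = x"
proof (cases "x = 0")
  case False
  have "x * (\<Prod>y\<in>UNIV-{0}. x * y) = x * x ^ (card (UNIV :: 'a set) - 1) * \<Prod>(UNIV-{0})"
    by (simp add: prod.distrib mult_ac)
  also have "x * x ^ (card (UNIV :: 'a set) - 1) = x ^ Suc (card (UNIV :: 'a set) - 1)"
    by (subst power_Suc) auto
  also have "Suc (card (UNIV :: 'a set) - 1) = card (UNIV :: 'a set)"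
    using finite_UNIV_card_ge_0[where ?'a = 'a] by simp
  also have "(\<Prod>y\<in>UNIV-{0}. x * y) = (\<Prod>y\<in>UNIV-{0}. y)"
    by (rule prod.reindex_bij_witness[of _ "\<lambda>y. y / x" "\<lambda>y. x * y"]) (use False in auto)
  finally show ?thesis
    by simp
qed (use finite_UNIV_card_ge_0[where ?'a = 'a] in auto)

lemma pow_card_minus1:
  fixes x :: "'a :: {field,finite}"
  assumes "x \<noteq> 0"
  shows "x ^ (card (UNIV :: 'a set) - 1) = 1"
proof -
  have "x * x ^ (card (UNIV :: 'a set) - 1) = x ^ Suc (card (UNIV :: 'a set) - 1)" by simp
  also have "Suc (card (UNIV :: 'a set) - 1) = card (UNIV :: 'a set)"
    using card_UNIV_ge2[where 'a='a] by simp
  finally have "x * x ^ (card (UNIV :: 'a set) - 1) = x * 1" by (simp add: pow_card_same)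
  thus ?thesis using assms by simp
qed

lemma prime_CHAR_fin: "prime CHAR('a::{field,finite})"
  by (rule prime_CHAR_semidom) (simp add: finite_imp_CHAR_pos)

lemma of_nat_mod_CHAR': "(of_nat (n mod CHAR('a)) :: 'a::{field,finite}) = of_nat n"
proof -
  have "(of_nat n :: 'a) = of_nat (n mod CHAR('a) + CHAR('a) * (n div CHAR('a)))" by simp
  also have "\<dots> = of_nat (n mod CHAR('a))" by (simp only: of_nat_add of_nat_mult of_nat_CHAR) simp
  finally show ?thesis by simp
qed

definition addsub :: "'a::ring_1 set \<Rightarrow> bool" where
  "addsub V \<longleftrightarrow> 0 \<in> V \<and> (\<forall>a\<in>V. \<forall>b\<in>V. a + b \<in> V)"

lemma addsub_ofnat: "addsub V \<Longrightarrow> v \<in> V \<Longrightarrow> of_nat k * v \<in> V"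
  by (induction k) (auto simp: addsub_def algebra_simps)

lemma addsub_neg:
  fixes V :: "'a::{field,finite} set"
  assumes "addsub V" "v \<in> V" shows "- v \<in> V"
proof -
  have p: "CHAR('a) > 0" using prime_CHAR_fin[where 'a='a] prime_gt_0_nat by blast
  have "of_nat (CHAR('a) - 1) * v + v = of_nat CHAR('a) * v"
    using p by (simp add: algebra_simps of_nat_diff)
  hence "of_nat (CHAR('a) - 1) * v + v = 0" by (simp add: of_nat_CHAR)
  hence "- v = of_nat (CHAR('a) - 1) * v" by (metis add_eq_0_iff2)
  thus ?thesis using addsub_ofnat[OF assms] by simp
qed

lemma ofnat_inverse:
  assumes "(of_nat d :: 'a::{field,finite}) \<noteq> 0"
  shows "\<exists>e. of_nat e * (of_nat d :: 'a) = 1"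
proof -
  let ?N = "card (UNIV :: 'a set)"
  have "(of_nat d :: 'a) ^ (?N - 1) = 1" using pow_card_minus1 assms by blast
  moreover have "?N - 1 = Suc (?N - 2)" using card_UNIV_ge2[where 'a='a] by simp
  ultimately have "of_nat (d ^ (?N - 2)) * (of_nat d :: 'a) = 1"
    by (simp add: of_nat_power mult.commute)
  thus ?thesis by blast
qed

lemma addsub_card_aux:
  fixes H :: "'a::{field,finite} set"
  assumes H: "addsub H"
  shows "addsub V \<Longrightarrow> V \<subseteq> H \<Longrightarrow> card V = CHAR('a) ^ j \<Longrightarrow> \<exists>k. card H = CHAR('a) ^ k"
proof (induction "card H - card V" arbitrary: V j rule: less_induct)
  case less
  let ?p = "CHAR('a)"
  have p: "?p > 0" using prime_CHAR_fin[where 'a='a] prime_gt_0_nat by blast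
  show ?case
  proof (cases "V = H")
    case True thus ?thesis using less by blast
  next
    case False
    then obtain y where y: "y \<in> H" "y \<notin> V" using less.prems(2) by blast
    define f where "f = (\<lambda>(i::nat, v::'a). of_nat i * y + v)"
    define V' where "V' = f ` ({..<?p} \<times> V)"
    have V'H: "V' \<subseteq> H"
      using H less.prems(2) y(1) addsub_ofnat[OF H] by (auto simp: V'_def f_def addsub_def)
    have addV': "addsub V'"
      unfolding addsub_def
    proof
      have "0 = f (0, 0)" by (simp add: f_def)
      moreover have "(0::nat, 0::'a) \<in> {..<?p} \<times> V" using p less.prems(1) by (auto simp: addsub_def)
      ultimately show "0 \<in> V'" unfolding V'_def by blast
    next
      show "\<forall>a\<in>V'. \<forall>b\<in>V'. a + b \<in> V'"
      proof (intro ballI)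
        fix a b assume "a \<in> V'" "b \<in> V'"
        then obtain i v i' v' where iv: "i < ?p" "v \<in> V" "a = of_nat i * y + v"
          and iv': "i' < ?p" "v' \<in> V" "b = of_nat i' * y + v'"
          by (auto simp: V'_def f_def)
        have "a + b = of_nat ((i + i') mod ?p) * y + (v + v')"
          using iv iv' by (simp add: of_nat_mod_CHAR' algebra_simps)
        also have "\<dots> = f ((i + i') mod ?p, v + v')" by (simp add: f_def)
        finally show "a + b \<in> V'"
          using p iv iv' less.prems(1) unfolding V'_def addsub_def by auto
      qed
    qed
    have inj: "inj_on f ({..<?p} \<times> V)"
    proof (rule inj_onI)
      fix x z assume x: "x \<in> {..<?p} \<times> V" and z: "z \<in> {..<?p} \<times> V" and eq: "f x = f z"
      obtain i v where [simp]: "x = (i, v)" by (cases x)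
      obtain i' v' where [simp]: "z = (i', v')" by (cases z)
      have iv: "i < ?p" "v \<in> V" "i' < ?p" "v' \<in> V" using x z by auto
      have e: "of_nat i * y + v = of_nat i' * y + v'" using eq by (simp add: f_def)
      have "i = i'"
      proof (rule ccontr)
        assume ne: "i \<noteq> i'"
        have key: "\<And>i i' v v'. i < ?p \<Longrightarrow> i' < i \<Longrightarrow> v \<in> V \<Longrightarrow> v' \<in> V \<Longrightarrow>
              of_nat i * y + v = of_nat i' * y + v' \<Longrightarrow> False"
        proof -
          fix i i' v v' assume a: "i < ?p" "i' < i" "v \<in> V" "v' \<in> V"
            "of_nat i * y + v = of_nat i' * y + v'"
          have "of_nat (i - i') * y = v' + - v"
            using a by (simp add: of_nat_diff algebra_simps)
          hence inV: "of_nat (i - i') * y \<in> V"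
            using a less.prems(1) addsub_neg[OF less.prems(1)] unfolding addsub_def by (metis a(3))
          have "\<not> ?p dvd (i - i')" using a by (auto dest: dvd_imp_le)
          hence "(of_nat (i - i') :: 'a) \<noteq> 0" by (simp add: of_nat_eq_0_iff_char_dvd)
          then obtain e where e: "of_nat e * (of_nat (i - i') :: 'a) = 1" using ofnat_inverse by blast
          have "y = of_nat e * (of_nat (i - i') * y)" by (simp add: mult.assoc[symmetric] e)
          hence "y \<in> V" using addsub_ofnat[OF less.prems(1) inV, of e] by metis
          thus False using y by simp
        qed
        show False
        proof (cases "i' < i")
          case True thus False using key[of i i' v v'] iv e by blast
        next
          case False hence "i < i'" using ne by simp
          thus False using key[of i' i v' v] iv e by simp
        qed
      qed
      moreover from this have "v = v'" using e by simp
      ultimately show "x = z" by simp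
    qed
    have cardV': "card V' = ?p ^ Suc j"
      unfolding V'_def using inj less.prems(3) by (simp add: card_image card_cartesian_product)
    have VV': "V \<subseteq> V'"
    proof
      fix v assume "v \<in> V"
      hence "f (0, v) \<in> V'" using p unfolding V'_def by auto
      thus "v \<in> V'" by (simp add: f_def)
    qed
    have "y \<in> V'"
    proof -
      have "f (1, 0) \<in> V'" using p less.prems(1) prime_CHAR_fin[where 'a='a]
        unfolding V'_def addsub_def by (intro imageI) (auto dest: prime_gt_1_nat)
      thus ?thesis by (simp add: f_def)
    qed
    hence "card V < card V'" using VV' y by (intro psubset_card_mono) auto
    moreover have "card V' \<le> card H" using V'H by (intro card_mono) auto
    ultimately have "card H - card V' < card H - card V" by simp
    thus ?thesis using less.hyps addV' V'H cardV' by blast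
  qed
qed

lemma addsub_card:
  fixes H :: "'a::{field,finite} set"
  assumes "addsub H"
  shows "\<exists>k. card H = CHAR('a) ^ k"
  using addsub_card_aux[OF assms, of "{0}" 0] assms by (auto simp: addsub_def)


lemma subfield_addsub: "subfield K \<Longrightarrow> addsub K"
  by (auto simp: subfield_def addsub_def)

lemma subfield_pow: "subfield K \<Longrightarrow> a \<in> K \<Longrightarrow> a ^ n \<in> K"
  by (induction n) (auto simp: subfield_def)

lemma subfield_pow_card:
  fixes K :: "'a::{field,finite} set"
  assumes K: "subfield K" and a: "a \<in> K"
  shows "a ^ card K = a"
proof (cases "a = 0")
  case True
  have "card K > 0" using K by (auto simp: subfield_def card_gt_0_iff)
  thus ?thesis using True by simp
next
  case False
  have fin: "finite (K - {0})" by simp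
  have c: "card (K - {0}) = card K - 1" using K by (simp add: subfield_def)
  have "(\<Prod>y\<in>K-{0}. a * y) = a ^ (card K - 1) * \<Prod>(K-{0})"
    by (simp add: prod.distrib c)
  also have "(\<Prod>y\<in>K-{0}. a * y) = (\<Prod>y\<in>K-{0}. y)"
    by (rule prod.reindex_bij_witness[of _ "\<lambda>y. y / a" "\<lambda>y. a * y"])
       (use False K a in \<open>auto simp: subfield_def divide_inverse mult.commute\<close>)
  finally have "a ^ (card K - 1) = 1" by simp
  moreover have "card K > 0" using K by (auto simp: subfield_def card_gt_0_iff)
  ultimately show ?thesis by (metis Suc_diff_1 mult.right_neutral power_Suc)
qed

lemma subfield_card_ge2:
  fixes K :: "'a::{field,finite} set"
  assumes "subfield K" shows "card K \<ge> 2"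
proof -
  have "card {0::'a, 1} \<le> card K" using assms by (intro card_mono) (auto simp: subfield_def)
  thus ?thesis by simp
qed

lemma roots_bound:
  fixes q :: nat
  assumes "q \<ge> 2"
  shows "card {x :: 'a::{field,finite}. x ^ q = x} \<le> q"
proof -
  define P where "P = monom (1::'a) q - [:0, 1:]"
  have "coeff P q = 1" using assms by (simp add: P_def coeff_pCons split: nat.split)
  hence "P \<noteq> 0" by auto
  have "degree P \<le> q" unfolding P_def
    using assms by (intro degree_diff_le) (auto simp: degree_monom_le)
  moreover have "{x. x ^ q = x} = {x. poly P x = 0}" by (auto simp: P_def poly_monom)
  ultimately show ?thesis using card_poly_roots_bound[OF \<open>P \<noteq> 0\<close>] by simp
qed

lemma frob_in_gal:
  fixes K :: "'a::{field,finite} set"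
  assumes K: "subfield K"
  shows "(\<lambda>x. x ^ card K) \<in> galois_group K"
proof -
  obtain k where k: "card K = CHAR('a) ^ k" using addsub_card[OF subfield_addsub[OF K]] by blast
  have add: "\<And>a b :: 'a. (a + b) ^ card K = a ^ card K + b ^ card K"
    using freshmans_dream'[OF prime_CHAR_fin k] by blast
  have inj: "inj (\<lambda>x::'a. x ^ card K)"
  proof (rule injI)
    fix x y :: 'a assume "x ^ card K = y ^ card K"
    moreover have "((x - y) + y) ^ card K = (x - y) ^ card K + y ^ card K" by (rule add)
    ultimately have "(x - y) ^ card K = 0" by simp
    thus "x = y" by simp
  qed
  hence "bij (\<lambda>x::'a. x ^ card K)" using finite_UNIV_inj_surj[of "\<lambda>x::'a. x ^ card K"] by (simp add: bij_def)
  thus ?thesis using add subfield_pow_card[OF K]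
    by (auto simp: galois_group_def power_mult_distrib)
qed

lemma fixed_in_K:
  fixes K :: "'a::{field,finite} set"
  assumes K: "subfield K" and c: "\<forall>\<phi>\<in>galois_group K. \<phi> c = c"
  shows "c \<in> K"
proof -
  let ?E = "{x :: 'a. x ^ card K = x}"
  have "K \<subseteq> ?E" using subfield_pow_card[OF K] by auto
  moreover have "card ?E \<le> card K" using roots_bound subfield_card_ge2[OF K] by blast
  ultimately have "K = ?E" by (intro card_seteq) auto
  moreover have "c \<in> ?E" using c frob_in_gal[OF K] by force
  ultimately show ?thesis by simp
qed

lemma gal_add: "\<phi> \<in> galois_group K \<Longrightarrow> \<phi> (a + b) = \<phi> a + \<phi> b"
  and gal_mult: "\<phi> \<in> galois_group K \<Longrightarrow> \<phi> (a * b) = \<phi> a * \<phi> b"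
  and gal_one: "\<phi> \<in> galois_group K \<Longrightarrow> \<phi> 1 = 1"
  and gal_fix: "\<phi> \<in> galois_group K \<Longrightarrow> a \<in> K \<Longrightarrow> \<phi> a = a"
  and gal_bij: "\<phi> \<in> galois_group K \<Longrightarrow> bij \<phi>"
  by (auto simp: galois_group_def)

lemma gal_zero: "\<phi> \<in> galois_group K \<Longrightarrow> \<phi> 0 = 0"
proof -
  assume "\<phi> \<in> galois_group K"
  hence "\<phi> 0 + \<phi> 0 = \<phi> 0 + 0" using gal_add[of \<phi> K 0 0] by simp
  thus ?thesis by (rule add_left_imp_eq)
qed

lemma gal_uminus: "\<phi> \<in> galois_group K \<Longrightarrow> \<phi> (- a) = - \<phi> a"
  using gal_add[of \<phi> K a "-a"] gal_zero[of \<phi> K] by (metis add_eq_0_iff2 minus_minus add.right_inverse)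

lemma gal_diff: "\<phi> \<in> galois_group K \<Longrightarrow> \<phi> (a - b) = \<phi> a - \<phi> b"
  using gal_add[of \<phi> K a "-b"] gal_uminus[of \<phi> K b] by simp

lemma gal_pow: "\<phi> \<in> galois_group K \<Longrightarrow> \<phi> (a ^ n) = \<phi> a ^ n"
  by (induction n) (simp_all add: gal_one gal_mult)

lemma gal_of_nat: "\<phi> \<in> galois_group K \<Longrightarrow> \<phi> (of_nat n) = of_nat n"
  by (induction n) (simp_all add: gal_one gal_add gal_zero)

lemma gal_sum: "\<phi> \<in> galois_group K \<Longrightarrow> \<phi> (sum f A) = (\<Sum>x\<in>A. \<phi> (f x))"
  by (induction A rule: infinite_finite_induct) (simp_all add: gal_zero gal_add)

lemma gal_prod: "\<phi> \<in> galois_group K \<Longrightarrow> \<phi> (prod f A) = (\<Prod>x\<in>A. \<phi> (f x))"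
  by (induction A rule: infinite_finite_induct) (simp_all add: gal_one gal_mult)


definition wco :: "nat \<Rightarrow> nat \<Rightarrow> 'a::comm_ring_1 \<Rightarrow> 'a" where
  "wco N e a = (if e = 0 then 1 else 0) - of_nat ((N - 1) choose e) * (- a) ^ (N - 1 - e)"

lemma wco_sum:
  fixes a x :: "'a::{field,finite}"
  defines "N \<equiv> card (UNIV :: 'a set)"
  shows "(\<Sum>e\<le>N-1. wco N e a * x ^ e) = (if x = a then 1 else 0)"
proof -
  have "(\<Sum>e\<le>N-1. wco N e a * x ^ e) =
        (\<Sum>e\<le>N-1. (if e = 0 then 1 else 0) * x ^ e) - (\<Sum>e\<le>N-1. of_nat ((N - 1) choose e) * x ^ e * (- a) ^ (N - 1 - e))"
    unfolding wco_def by (simp add: sum_subtractf algebra_simps)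
  also have "(\<Sum>e\<le>N-1. (if e = 0 then 1 else 0) * x ^ e) = 1"
  proof -
    have "(\<Sum>e\<le>N-1. (if e = 0 then 1 else 0) * x ^ e) = (\<Sum>e\<le>N-1. if e = 0 then 1 else (0::'a))"
      by (rule sum.cong) auto
    thus ?thesis by (simp add: sum.delta)
  qed
  also have "(\<Sum>e\<le>N-1. of_nat ((N - 1) choose e) * x ^ e * (- a) ^ (N - 1 - e)) = (x + - a) ^ (N - 1)"
    by (rule binomial_ring[symmetric])
  finally have eq: "(\<Sum>e\<le>N-1. wco N e a * x ^ e) = 1 - (x - a) ^ (N - 1)" by simp
  have N2: "N \<ge> 2" unfolding N_def by (rule card_UNIV_ge2)
  show ?thesis
  proof (cases "x = a")
    case True thus ?thesis using eq N2 by simp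
  next
    case False thus ?thesis using eq pow_card_minus1[of "x - a"] unfolding N_def by simp
  qed
qed

lemma gal_wco: "\<phi> \<in> galois_group K \<Longrightarrow> \<phi> (wco N e a) = wco N e (\<phi> a)"
  unfolding wco_def by (simp add: gal_diff gal_mult gal_pow gal_uminus gal_of_nat gal_one gal_zero)

definition Sset :: "nat \<Rightarrow> ('n \<Rightarrow> nat) set" where
  "Sset N = {e. \<forall>j. e j \<le> N - 1}"

lemma Sset_PiE: "Sset N = PiE UNIV (\<lambda>_. {..N - 1})"
  by (auto simp: Sset_def PiE_UNIV_domain)

lemma finite_Sset: "finite (Sset N :: ('n::finite \<Rightarrow> nat) set)"
  unfolding Sset_PiE by (rule finite_PiE) auto

definition coef :: "(('n::finite \<Rightarrow> 'a) \<Rightarrow> ('n \<Rightarrow> 'a)) \<Rightarrow> 'n \<Rightarrow> ('n \<Rightarrow>\<^sub>0 nat) \<Rightarrow> 'a::{field,finite}" where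
  "coef \<sigma> i m = (if Poly_Mapping.lookup m \<in> Sset (card (UNIV::'a set))
      then (\<Sum>a\<in>UNIV. \<sigma> a i * (\<Prod>j\<in>UNIV. wco (card (UNIV::'a set)) (Poly_Mapping.lookup m j) (a j))) else 0)"

definition Pol :: "(('n::finite \<Rightarrow> 'a) \<Rightarrow> ('n \<Rightarrow> 'a)) \<Rightarrow> 'n \<Rightarrow> ('n, 'a::{field,finite}) mpoly" where
  "Pol \<sigma> i = Abs_poly_mapping (coef \<sigma> i)"

lemma finite_lookup_vimage: "finite (Poly_Mapping.lookup -` (Sset N) :: ('n::finite \<Rightarrow>\<^sub>0 nat) set)"
  by (rule finite_vimageI[OF finite_Sset]) (auto simp: inj_def)

lemma lookup_Pol:
  fixes \<sigma> :: "('n::finite \<Rightarrow> 'a) \<Rightarrow> ('n \<Rightarrow> 'a::{field,finite})"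
  shows "Poly_Mapping.lookup (Pol \<sigma> i) = coef \<sigma> i"
proof -
  have "{m. coef \<sigma> i m \<noteq> 0} \<subseteq> Poly_Mapping.lookup -` (Sset (card (UNIV::'a set)))"
    by (auto simp: coef_def split: if_splits)
  hence "finite {m. coef \<sigma> i m \<noteq> 0}" using finite_lookup_vimage finite_subset by blast
  thus ?thesis by (simp add: Pol_def)
qed

lemma eval_Pol:
  fixes \<sigma> :: "('n::finite \<Rightarrow> 'a) \<Rightarrow> ('n \<Rightarrow> 'a::{field,finite})"
  shows "mpoly_eval (Pol \<sigma> i) x = \<sigma> x i"
proof -
  let ?N = "card (UNIV :: 'a set)"
  let ?S = "Sset ?N :: ('n \<Rightarrow> nat) set"
  let ?g = "\<lambda>e. (\<Sum>a\<in>UNIV. \<sigma> a i * (\<Prod>j\<in>UNIV. wco ?N (e j) (a j))) * (\<Prod>j\<in>UNIV. x j ^ e j)"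
  have "mpoly_eval (Pol \<sigma> i) x = (\<Sum>m\<in>Poly_Mapping.keys (Pol \<sigma> i). coef \<sigma> i m * (\<Prod>j\<in>UNIV. x j ^ Poly_Mapping.lookup m j))"
    by (simp add: mpoly_eval_def lookup_Pol)
  also have "\<dots> = (\<Sum>m\<in>Poly_Mapping.lookup -` ?S. coef \<sigma> i m * (\<Prod>j\<in>UNIV. x j ^ Poly_Mapping.lookup m j))"
    by (rule sum.mono_neutral_left[OF finite_lookup_vimage])
       (auto simp: in_keys_iff lookup_Pol coef_def split: if_splits)
  also have "\<dots> = (\<Sum>m\<in>Poly_Mapping.lookup -` ?S. ?g (Poly_Mapping.lookup m))"
    by (rule sum.cong) (auto simp: coef_def)
  also have "\<dots> = (\<Sum>e\<in>?S. ?g e)"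
  proof (rule sum.reindex_bij_betw)
    show "bij_betw Poly_Mapping.lookup (Poly_Mapping.lookup -` ?S) ?S"
    proof (rule bij_betw_imageI)
      show "inj_on Poly_Mapping.lookup (Poly_Mapping.lookup -` ?S)" by (auto simp: inj_on_def)
      show "Poly_Mapping.lookup ` (Poly_Mapping.lookup -` ?S) = ?S"
      proof (rule surj_image_vimage_eq)
        show "surj (Poly_Mapping.lookup :: ('n \<Rightarrow>\<^sub>0 nat) \<Rightarrow> _)"
        proof (rule surjI)
          fix e :: "'n \<Rightarrow> nat" show "Poly_Mapping.lookup (Abs_poly_mapping e) = e" by simp
        qed
      qed
    qed
  qed
  also have "\<dots> = (\<Sum>a\<in>UNIV. \<sigma> a i * (\<Sum>e\<in>?S. \<Prod>j\<in>UNIV. wco ?N (e j) (a j) * x j ^ e j))"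
    by (simp add: sum_distrib_left sum_distrib_right sum.swap[of _ ?S] prod.distrib mult.assoc)
  also have "\<dots> = (\<Sum>a\<in>UNIV. \<sigma> a i * (\<Prod>j\<in>UNIV. \<Sum>t\<le>?N - 1. wco ?N t (a j) * x j ^ t))"
    by (simp add: Sset_PiE prod_sum_PiE)
  also have "\<dots> = (\<Sum>a\<in>UNIV. \<sigma> a i * (\<Prod>j\<in>UNIV. if x j = a j then 1 else 0))"
    by (simp only: wco_sum)
  also have "\<dots> = (\<Sum>a\<in>UNIV. if a = x then \<sigma> a i else 0)"
  proof (rule sum.cong[OF refl])
    fix a
    show "\<sigma> a i * (\<Prod>j\<in>UNIV. if x j = a j then 1 else 0) = (if a = x then \<sigma> a i else 0)"
    proof (cases "a = x")
      case False
      then obtain j where "x j \<noteq> a j" by (metis ext)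
      hence "(\<Prod>j\<in>UNIV. if x j = a j then 1 else (0::'a)) = 0" by (intro prod_zero) auto
      thus ?thesis using False by simp
    qed simp
  qed
  also have "\<dots> = \<sigma> x i" by simp
  finally show ?thesis .
qed


lemma coef_in_K:
  fixes K :: "'a::{field,finite} set" and \<sigma> :: "('n::finite \<Rightarrow> 'a) \<Rightarrow> ('n \<Rightarrow> 'a)"
  assumes K: "subfield K"
    and eqv: "\<forall>\<phi>\<in>galois_group K. \<forall>x. \<sigma> (\<phi> \<circ> x) = \<phi> \<circ> \<sigma> x"
  shows "coef \<sigma> i m \<in> K"
proof (cases "Poly_Mapping.lookup m \<in> Sset (card (UNIV::'a set))")
  case False thus ?thesis using K by (simp add: coef_def subfield_def)
next
  case True
  let ?N = "card (UNIV::'a set)"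
  let ?g = "\<lambda>a. \<sigma> a i * (\<Prod>j\<in>UNIV. wco ?N (Poly_Mapping.lookup m j) (a j))"
  have "(\<Sum>a\<in>UNIV. ?g a) \<in> K"
  proof (rule fixed_in_K[OF K], intro ballI)
    fix \<phi> assume \<phi>: "\<phi> \<in> galois_group K"
    have b: "bij \<phi>" using gal_bij[OF \<phi>] .
    have "\<phi> (\<Sum>a\<in>UNIV. ?g a) = (\<Sum>a\<in>UNIV. ?g (\<phi> \<circ> a))"
    proof -
      have "\<phi> (\<Sum>a\<in>UNIV. ?g a) = (\<Sum>a\<in>UNIV. \<phi> (\<sigma> a i) * (\<Prod>j\<in>UNIV. wco ?N (Poly_Mapping.lookup m j) (\<phi> (a j))))"
        by (simp add: gal_sum[OF \<phi>] gal_mult[OF \<phi>] gal_prod[OF \<phi>] gal_wco[OF \<phi>])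
      also have "\<dots> = (\<Sum>a\<in>UNIV. ?g (\<phi> \<circ> a))"
        using eqv \<phi> by (simp add: fun_eq_iff)
      finally show ?thesis .
    qed
    also have "\<dots> = (\<Sum>a\<in>UNIV. ?g a)"
      by (rule sum.reindex_bij_witness[of _ "\<lambda>a. inv \<phi> \<circ> a" "\<lambda>a. \<phi> \<circ> a"])
         (use b in \<open>auto simp: fun_eq_iff bij_is_inj bij_is_surj surj_f_inv_f\<close>)
    finally show "\<phi> (\<Sum>a\<in>UNIV. ?g a) = (\<Sum>a\<in>UNIV. ?g a)" .
  qed
  thus ?thesis using True by (simp add: coef_def)
qed

theorem mainTheorem6:
  fixes K :: "'a::{field,finite} set"
  assumes "subfield K"
  shows "(induced_map :: ('n::finite \<Rightarrow> ('n, 'a) mpoly) \<Rightarrow> _) ` MA K =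
         {\<sigma> :: ('n \<Rightarrow> 'a) \<Rightarrow> ('n \<Rightarrow> 'a).
            \<forall>\<phi>\<in>galois_group K. \<forall>x. \<sigma> (\<phi> \<circ> x) = \<phi> \<circ> \<sigma> x}"
proof (intro equalityI subsetI)
  fix s assume "s \<in> (induced_map :: ('n::finite \<Rightarrow> ('n, 'a) mpoly) \<Rightarrow> _) ` MA K"
  then obtain F :: "'n \<Rightarrow> ('n, 'a) mpoly" where F: "F \<in> MA K" and s: "s = induced_map F" by blast
  show "s \<in> {\<sigma>. \<forall>\<phi>\<in>galois_group K. \<forall>x. \<sigma> (\<phi> \<circ> x) = \<phi> \<circ> \<sigma> x}"
  proof (intro CollectI ballI allI)
    fix \<phi> x assume \<phi>: "\<phi> \<in> galois_group K"
    show "s (\<phi> \<circ> x) = \<phi> \<circ> s x"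
      unfolding s induced_map_def mpoly_eval_def
      using F by (simp add: fun_eq_iff gal_sum[OF \<phi>] gal_mult[OF \<phi>] gal_prod[OF \<phi>] gal_pow[OF \<phi>]
          gal_fix[OF \<phi>] MA_def)
  qed
next
  fix \<sigma> :: "('n \<Rightarrow> 'a) \<Rightarrow> ('n \<Rightarrow> 'a)"
  assume "\<sigma> \<in> {\<sigma>. \<forall>\<phi>\<in>galois_group K. \<forall>x. \<sigma> (\<phi> \<circ> x) = \<phi> \<circ> \<sigma> x}"
  hence eqv: "\<forall>\<phi>\<in>galois_group K. \<forall>x. \<sigma> (\<phi> \<circ> x) = \<phi> \<circ> \<sigma> x" by simp
  have "Pol \<sigma> \<in> MA K"
    using coef_in_K[OF assms eqv] by (simp add: MA_def lookup_Pol)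
  moreover have "\<sigma> = induced_map (Pol \<sigma>)"
    by (simp add: fun_eq_iff induced_map_def eval_Pol)
  ultimately show "\<sigma> \<in> (induced_map :: ('n::finite \<Rightarrow> ('n, 'a) mpoly) \<Rightarrow> _) ` MA K" by blast
qed

end
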